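(* For every $n\ge1$, the parity function $\Pi:\{0,1\}^n\to\{0,1\}$ ($\Pi(x)=1$ iff $\sum_{j=1}^n x_j$ is odd) has a $y$-linear quadratization involving $\lfloor n/2\rfloor$ auxiliary variables, and its complement $\overline{\Pi}=1-\Pi$ has a $y$-linear quadratization involving $\lfloor (n-1)/2\rfloor$ auxiliary variables.
   Context: A quadratization of $f:\{0,1\}^n\to\mathbb{R}$ using $m$ auxiliary variables is a polynomial $g(x,y)$ of degree at most $2$ in $x_1,\ldots,x_n,y_1,\ldots,y_m$ such that $f(x)=\min\{g(x,y):y\in\{0,1\}^m\}$ for all $x\in\{0,1\}^n$. It is $y$-linear if it contains no product of two auxiliary variables, i.e. $g(x,y)=q(x)+\sum_{i=1}^m a_i(x)y_i$ with $q$ quadratic and each $a_i$ affine in $x$. *)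

theory Defs
  imports Complex_Main
begin

definition bool_cube :: "nat \<Rightarrow> (nat \<Rightarrow> real) set" where
  "bool_cube n = {x. (\<forall>j<n. x j \<in> {0, 1}) \<and> (\<forall>j\<ge>n. x j = 0)}"

definition quad_poly :: "nat \<Rightarrow> real \<Rightarrow> (nat \<Rightarrow> real) \<Rightarrow> (nat \<Rightarrow> nat \<Rightarrow> real) \<Rightarrow> (nat \<Rightarrow> real) \<Rightarrow> real" where
  "quad_poly n c b C x = c + (\<Sum>j<n. b j * x j) + (\<Sum>j<n. \<Sum>k<n. C j k * x j * x k)"

definition affine_poly :: "nat \<Rightarrow> real \<Rightarrow> (nat \<Rightarrow> real) \<Rightarrow> (nat \<Rightarrow> real) \<Rightarrow> real" where
  "affine_poly n a0 a x = a0 + (\<Sum>j<n. a j * x j)"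

definition ylinear_quadratization :: "nat \<Rightarrow> nat \<Rightarrow> ((nat \<Rightarrow> real) \<Rightarrow> real) \<Rightarrow> bool" where
  "ylinear_quadratization n m f \<longleftrightarrow>
     (\<exists>c b C a0 a.
        (\<forall>x\<in>bool_cube n.
           let g = (\<lambda>y. quad_poly n c b C x + (\<Sum>i<m. affine_poly n (a0 i) (a i) x * y i))
           in (\<forall>y\<in>bool_cube m. f x \<le> g y) \<and> (\<exists>y\<in>bool_cube m. g y = f x)))"

definition parity :: "nat \<Rightarrow> (nat \<Rightarrow> real) \<Rightarrow> real" where
  "parity n x = (if odd (card {j. j < n \<and> x j = 1}) then 1 else 0)"

end

theory Submission
  imports Defs
begin

lemma min_sum_le:
  fixes L :: "nat \<Rightarrow> real"
  assumes "y \<in> bool_cube m"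
  shows "(\<Sum>i<m. min 0 (L i)) \<le> (\<Sum>i<m. L i * y i)"
proof (rule sum_mono)
  fix i assume "i \<in> {..<m}"
  then have "y i = 0 \<or> y i = 1" using assms by (auto simp: bool_cube_def)
  then show "min 0 (L i) \<le> L i * y i" by auto
qed

lemma min_sum_att:
  fixes L :: "nat \<Rightarrow> real"
  shows "\<exists>y\<in>bool_cube m. (\<Sum>i<m. L i * y i) = (\<Sum>i<m. min 0 (L i))"
proof -
  define y where "y = (\<lambda>i. if i < m \<and> L i < 0 then (1::real) else 0)"
  have "y \<in> bool_cube m" by (auto simp: bool_cube_def y_def)
  moreover have "(\<Sum>i<m. L i * y i) = (\<Sum>i<m. min 0 (L i))"
    by (rule sum.cong) (auto simp: y_def)
  ultimately show ?thesis by blast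
qed

lemma cube_sum:
  assumes "x \<in> bool_cube n"
  shows "(\<Sum>j<n. x j) = real (card {j. j < n \<and> x j = 1})"
proof -
  have "(\<Sum>j<n. x j) = (\<Sum>j<n. if x j = 1 then 1 else 0)"
    using assms by (intro sum.cong) (auto simp: bool_cube_def)
  also have "\<dots> = real (card ({..<n} \<inter> {j. x j = 1}))"
    by (simp add: sum.If_cases)
  also have "{..<n} \<inter> {j. x j = 1} = {j. j < n \<and> x j = 1}" by auto
  finally show ?thesis .
qed

lemma generic:
  fixes c :: real and b :: real and U :: "nat \<Rightarrow> real" and V :: real
  assumes "\<And>x. x \<in> bool_cube n \<Longrightarrow>
     f x = c + b * real (card {j. j < n \<and> x j = 1}) + (real (card {j. j < n \<and> x j = 1}))^2
       + (\<Sum>i<m. min 0 (U i + V * real (card {j. j < n \<and> x j = 1})))"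
  shows "ylinear_quadratization n m f"
  unfolding ylinear_quadratization_def
proof (rule exI[of _ c], rule exI[of _ "\<lambda>_. b"], rule exI[of _ "\<lambda>_ _. 1"], rule exI[of _ U], rule exI[of _ "\<lambda>_ _. V"], rule ballI)
  fix x assume x: "x \<in> bool_cube n"
  define s where "s = real (card {j. j < n \<and> x j = 1})"
  have S: "(\<Sum>j<n. x j) = s" using cube_sum[OF x] s_def by simp
  have Q: "quad_poly n c (\<lambda>_. b) (\<lambda>_ _. 1) x = c + b * s + s^2"
  proof -
    have "(\<Sum>j<n. \<Sum>k<n. 1 * x j * x k) = (\<Sum>j<n. x j) * (\<Sum>k<n. x k)"
      by (simp add: sum_product)
    then show ?thesis unfolding quad_poly_def using S
      by (simp add: sum_distrib_left[symmetric] power2_eq_square)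
  qed
  have Aff: "\<And>i. affine_poly n (U i) (\<lambda>_. V) x = U i + V * s"
    unfolding affine_poly_def using S by (simp add: sum_distrib_left[symmetric])
  have F: "f x = c + b * s + s^2 + (\<Sum>i<m. min 0 (U i + V * s))"
    using assms[OF x] s_def by simp
  show "let g = \<lambda>y. quad_poly n c (\<lambda>_. b) (\<lambda>_ _. 1) x + (\<Sum>i<m. affine_poly n (U i) (\<lambda>_. V) x * y i)
        in (\<forall>y\<in>bool_cube m. f x \<le> g y) \<and> (\<exists>y\<in>bool_cube m. g y = f x)"
    unfolding Let_def Q Aff F
    using min_sum_le[of _ m "\<lambda>i. U i + V * s"] min_sum_att[of m "\<lambda>i. U i + V * s"]
    by force
qed

lemma sum1:
  "(\<Sum>i<m. min 0 (4 * real (2*i+1) + (-4) * real s)) =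
     4 * real (min m (s div 2))^2 - 4 * real (min m (s div 2)) * real s"
proof (induction m)
  case 0 then show ?case by simp
next
  case (Suc m)
  show ?case
  proof (cases "m < s div 2")
    case True
    then have "2*m+2 \<le> s" by linarith
    then have "4 * real (2*m+1) + (-4) * real s < 0" by simp
    moreover have "min (Suc m) (s div 2) = Suc m" "min m (s div 2) = m" using True by auto
    ultimately show ?thesis using Suc by (simp add: power2_eq_square algebra_simps)
  next
    case False
    then have "s \<le> 2*m+1" by linarith
    then have "4 * real (2*m+1) + (-4) * real s \<ge> 0" by simp
    moreover have "min (Suc m) (s div 2) = min m (s div 2)" using False by auto
    ultimately show ?thesis using Suc by simp
  qed
qed

lemma sum2:
  "(\<Sum>i<m. min 0 (4 * real (2*i+2) + (-4) * real s)) =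
     4 * real (min m ((s-1) div 2))^2 + 4 * real (min m ((s-1) div 2)) - 4 * real (min m ((s-1) div 2)) * real s"
proof (induction m)
  case 0 then show ?case by simp
next
  case (Suc m)
  show ?case
  proof (cases "m < (s-1) div 2")
    case True
    then have "2*m+3 \<le> s" by linarith
    then have "4 * real (2*m+2) + (-4) * real s < 0" by simp
    moreover have "min (Suc m) ((s-1) div 2) = Suc m" "min m ((s-1) div 2) = m" using True by auto
    ultimately show ?thesis using Suc by (simp add: power2_eq_square algebra_simps)
  next
    case False
    then have "s \<le> 2*m+2" by linarith
    then have "4 * real (2*m+2) + (-4) * real s \<ge> 0" by simp
    moreover have "min (Suc m) ((s-1) div 2) = min m ((s-1) div 2)" using False by auto
    ultimately show ?thesis using Suc by simp
  qed
qed

lemma card_le: "card {j. j < n \<and> x j = 1} \<le> n"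
proof -
  have "card {j. j < n \<and> x j = 1} \<le> card {..<n}" by (rule card_mono) auto
  then show ?thesis by simp
qed

lemma par1:
  assumes "s \<le> n"
  shows "(if odd s then 1 else 0) = 0 * real s + (real s)^2 +
     (\<Sum>i<n div 2. min 0 (4 * real (2*i+1) + (-4) * real s))"
proof -
  define k where "k = s div 2"
  have mk: "min (n div 2) (s div 2) = k" using assms k_def by (simp add: div_le_mono min_absorb2)
  have "s = 2*k + s mod 2" using k_def by simp
  then have "real s = 2 * real k + real (s mod 2)" by (metis of_nat_add of_nat_mult of_nat_numeral)
  moreover have "s mod 2 = 0 \<or> s mod 2 = 1" by auto
  ultimately show ?thesis unfolding sum1 mk
    by (auto simp: power2_eq_square algebra_simps odd_iff_mod_2_eq_one)
qed

lemma par2: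
  assumes "s \<le> n"
  shows "1 - (if odd s then 1 else 0) = 1 + (-2) * real s + (real s)^2 +
     (\<Sum>i<(n-1) div 2. min 0 (4 * real (2*i+2) + (-4) * real s))"
proof (cases "s = 0")
  case True then show ?thesis by simp
next
  case False
  define k where "k = (s-1) div 2"
  have mk: "min ((n-1) div 2) ((s-1) div 2) = k" using assms k_def
    by (simp add: div_le_mono min_absorb2)
  have "s - 1 = 2*k + (s-1) mod 2" using k_def by simp
  then have "real s - 1 = 2 * real k + real ((s-1) mod 2)" using False
    by (metis of_nat_1 of_nat_add of_nat_diff of_nat_mult of_nat_numeral not_gr0 Suc_le_eq One_nat_def)
  moreover have "(s-1) mod 2 = 0 \<or> (s-1) mod 2 = 1" by auto
  moreover have "odd s \<longleftrightarrow> (s-1) mod 2 = 0" using False by (cases s) auto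
  ultimately show ?thesis unfolding sum2 mk
    by (auto simp: power2_eq_square algebra_simps)
qed

theorem theorem6:
  fixes n :: nat
  assumes "n \<ge> 1"
  shows "ylinear_quadratization n (n div 2) (parity n)
       \<and> ylinear_quadratization n ((n - 1) div 2) (\<lambda>x. 1 - parity n x)"
proof
  show "ylinear_quadratization n (n div 2) (parity n)"
    by (rule generic[where c=0 and b=0 and U="\<lambda>i. 4 * real (2*i+1)" and V="-4"])
      (simp add: parity_def par1[OF card_le, simplified])
  show "ylinear_quadratization n ((n - 1) div 2) (\<lambda>x. 1 - parity n x)"
    by (rule generic[where c=1 and b="-2" and U="\<lambda>i. 4 * real (2*i+2)" and V="-4"])
      (simp add: parity_def par2[OF card_le, simplified])
qed

end
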